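(* Let $(B,G)$ be an admissible pair with $B\in M_{Q_0}(\mathbb Z)$, let $(A,\mathbf x)$ be a $G$-invariant seed in $\mathcal A(B)$ and let $\Omega$ be a $G$-orbit in $Q_0$. Let $(A^{(n)},\mathbf x^{(n)})=\mu^G_\Omega(A,\mathbf x)$, with $A^{(n)}=(a^{(n)}_{ij})$ and $\mathbf x^{(n)}=(x^{(n)}_i)_{i\in Q_0}$. Then $G$ is an automorphism group of $A^{(n)}$, and for all $i\in Q_0$ and $g\in G$: $$a^{(n)}_{i,gi}=0\quad\text{and}\quad x^{(n)}_{gi}=g\,x^{(n)}_i.$$
   Context: $Q_0$ finite; matrices are skew-symmetrizable ($DB$ skew-symmetric for a positive integer diagonal $D$). Mutation of matrices: $\mu_k(M)=(m'_{ij})$ with $m'_{ij}=-m_{ij}$ if $k\in\{i,j\}$, else $m_{ij}+\tfrac12(|m_{ik}|m_{kj}+m_{ik}|m_{kj}|)$; of seeds: $\mu_k(M,\mathbf y)=(\mu_k(M),\mathbf y')$ with $y'_i=y_i$ ($i\ne k$) and $y_ky'_k=\prod_{m_{ik}>0}y_i^{m_{ik}}+\prod_{m_{ik}<0}y_i^{-m_{ik}}$. $\mathcal A(B)=\mathcal A(B,\mathbf u)$ is the cluster algebra with initial seed $(B,\mathbf u)$, $\mathbf u=(u_i)_{i\in Q_0}$; its seeds are those obtained by finite sequences of mutations. A permutation $g$ of $Q_0$ is an automorphism of $S=(s_{ij})$ if $s_{gi,gj}=s_{ij}$ for all $i,j$; a group $G$ of automorphisms is admissible ($(S,G)$ an admissible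 pair) if for distinct $i,j$ in the same $G$-orbit there is no path of length $1$ or $2$ from $i$ to $j$ in the quiver of $S$ ($s_{ij}\le0$ and no $k$ with $s_{ik}>0$, $s_{kj}>0$). $G$ acts on $\mathbb Z[\mathbf u^{\pm1}]$ by $gu_i=u_{gi}$. A seed $(S,\mathbf x)$ is $G$-invariant if $gx_i=x_{gi}$ for all $g,i$ and $(S,G)$ is an admissible pair. The orbit mutation is $\mu^G_\Omega=\prod_{j\in\Omega}\mu_j$ (mutation at all elements of $\Omega$, order irrelevant). *)

theory Defs
  imports "HOL-Library.Poly_Mapping" "HOL-Computational_Algebra.Fraction_Field"
begin

type_synonym 'q imat = "'q \<Rightarrow> 'q \<Rightarrow> int"

text \<open>Z[u_i : i in Q0] as finitely supported functions from monomials to int,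
  and the field of rational functions Q(u) as its fraction field.\<close>
type_synonym 'q zpoly = "('q \<Rightarrow>\<^sub>0 nat) \<Rightarrow>\<^sub>0 int"
type_synonym 'q ratfun = "'q zpoly fract"

definition skew_symmetrizable :: "'q imat \<Rightarrow> bool" where
  "skew_symmetrizable B \<longleftrightarrow>
     (\<exists>d :: 'q \<Rightarrow> int. (\<forall>i. d i > 0) \<and> (\<forall>i j. d i * B i j = - (d j * B j i)))"

text \<open>Matrix mutation; the term |m_ik| m_kj + m_ik |m_kj| is always even.\<close>
definition mut_mat :: "'q \<Rightarrow> 'q imat \<Rightarrow> 'q imat" where
  "mut_mat k M = (\<lambda>i j. if i = k \<or> j = k then - M i j
                        else M i j + (\<bar>M i k\<bar> * M k j + M i k * \<bar>M k j\<bar>) div 2)"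

definition mut_seed :: "'q::finite \<Rightarrow> 'q imat \<times> ('q \<Rightarrow> 'a::field) \<Rightarrow> 'q imat \<times> ('q \<Rightarrow> 'a)" where
  "mut_seed k s = (case s of (M, y) \<Rightarrow>
     (mut_mat k M,
      y(k := ((\<Prod>i\<in>{i. M i k > 0}. y i ^ nat (M i k)) + (\<Prod>i\<in>{i. M i k < 0}. y i ^ nat (- M i k)))
             / y k)))"

definition uvar :: "'q \<Rightarrow> 'q::linorder ratfun" where
  "uvar i = Fract (Poly_Mapping.single (Poly_Mapping.single i 1) 1) 1"

inductive_set cluster_seeds :: "'q::{finite,linorder} imat \<Rightarrow> ('q imat \<times> ('q \<Rightarrow> 'q ratfun)) set"
  for B where
  init: "(B, uvar) \<in> cluster_seeds B"
| mut: "s \<in> cluster_seeds B \<Longrightarrow> mut_seed k s \<in> cluster_seeds B"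

text \<open>Action of a permutation g of Q0 on Z[u] by u_i \<mapsto> u_{g i}:
  the monomial m goes to m \<circ> inv g, so the coefficient of m' in g p is the coefficient of m' \<circ> g in p.\<close>
definition poly_act :: "('q \<Rightarrow> 'q) \<Rightarrow> 'q zpoly \<Rightarrow> 'q zpoly" where
  "poly_act g p = Poly_Mapping.map_key (\<lambda>m. Poly_Mapping.map_key g m) p"

text \<open>Extension to the fraction field (independent of the chosen representative).\<close>
definition act :: "('q \<Rightarrow> 'q) \<Rightarrow> 'q::linorder ratfun \<Rightarrow> 'q ratfun" where
  "act g q = (case (SOME r. snd r \<noteq> 0 \<and> q = Fract (fst r) (snd r)) of
                (a, b) \<Rightarrow> Fract (poly_act g a) (poly_act g b))"

definition is_aut :: "'q imat \<Rightarrow> ('q \<Rightarrow> 'q) \<Rightarrow> bool" where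
  "is_aut S g \<longleftrightarrow> bij g \<and> (\<forall>i j. S (g i) (g j) = S i j)"

definition aut_group :: "'q imat \<Rightarrow> ('q \<Rightarrow> 'q) set \<Rightarrow> bool" where
  "aut_group S G \<longleftrightarrow> (\<forall>g\<in>G. is_aut S g) \<and> id \<in> G \<and>
     (\<forall>g\<in>G. \<forall>h\<in>G. g \<circ> h \<in> G) \<and> (\<forall>g\<in>G. inv g \<in> G)"

definition admissible :: "'q imat \<Rightarrow> ('q \<Rightarrow> 'q) set \<Rightarrow> bool" where
  "admissible S G \<longleftrightarrow> aut_group S G \<and>
     (\<forall>i j. (\<exists>g\<in>G. j = g i) \<and> i \<noteq> j \<longrightarrow>
        S i j \<le> 0 \<and> \<not> (\<exists>k. S i k > 0 \<and> S k j > 0))"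

definition G_invariant_seed :: "('q \<Rightarrow> 'q) set \<Rightarrow> 'q imat \<times> ('q \<Rightarrow> 'q::linorder ratfun) \<Rightarrow> bool" where
  "G_invariant_seed G s \<longleftrightarrow> (case s of (S, x) \<Rightarrow>
     admissible S G \<and> (\<forall>g\<in>G. \<forall>i. act g (x i) = x (g i)))"

definition G_orbit :: "('q \<Rightarrow> 'q) set \<Rightarrow> 'q set \<Rightarrow> bool" where
  "G_orbit G \<Omega> \<longleftrightarrow> (\<exists>i. \<Omega> = (\<lambda>g. g i) ` G)"

end

theory Submission
  imports Defs
begin

lemma lookup_map_key: "inj f \<Longrightarrow> Poly_Mapping.lookup (Poly_Mapping.map_key f p) k = Poly_Mapping.lookup p (f k)"
  by (simp add: map_key.rep_eq)

lemma mk_inj: assumes "bij (g::'q \<Rightarrow> 'q)" shows "inj (Poly_Mapping.map_key g :: ('q \<Rightarrow>\<^sub>0 nat) \<Rightarrow> _)"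
proof
  fix m m' :: "'q \<Rightarrow>\<^sub>0 nat" assume "Poly_Mapping.map_key g m = Poly_Mapping.map_key g m'"
  then have "\<And>k. Poly_Mapping.lookup m (g k) = Poly_Mapping.lookup m' (g k)"
    by (metis assms bij_is_inj lookup_map_key)
  then show "m = m'" using assms by (metis bij_pointE poly_mapping_eqI)
qed

lemma mk_bij: assumes "bij (g::'q \<Rightarrow> 'q)" shows "bij (Poly_Mapping.map_key g :: ('q \<Rightarrow>\<^sub>0 nat) \<Rightarrow> _)"
proof (rule bijI[OF mk_inj[OF assms]])
  show "surj (Poly_Mapping.map_key g :: ('q \<Rightarrow>\<^sub>0 nat) \<Rightarrow> _)"
  proof (rule surjI)
    fix m :: "'q \<Rightarrow>\<^sub>0 nat"
    have "inj (inv g)" using assms by (simp add: bij_imp_bij_inv bij_is_inj)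
    show "Poly_Mapping.map_key g (Poly_Mapping.map_key (inv g) m) = m"
      by (rule poly_mapping_eqI) (simp add: lookup_map_key \<open>inj (inv g)\<close> assms bij_is_inj bij_inv_eq_iff)
  qed
qed

lemma mk_add: "inj g \<Longrightarrow> Poly_Mapping.map_key g (a + b :: 'q \<Rightarrow>\<^sub>0 nat) = Poly_Mapping.map_key g a + Poly_Mapping.map_key g b"
  by (rule map_key_plus)

lemma lookup_poly_act: "bij g \<Longrightarrow> Poly_Mapping.lookup (poly_act g p) m = Poly_Mapping.lookup p (Poly_Mapping.map_key g m)"
  unfolding poly_act_def by (simp add: lookup_map_key mk_inj)

lemma poly_act_add: "bij g \<Longrightarrow> poly_act g (p + q) = poly_act g p + poly_act g q"
  by (rule poly_mapping_eqI) (simp add: lookup_poly_act lookup_add)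

lemma poly_act_zero: "bij g \<Longrightarrow> poly_act g 0 = 0"
  by (rule poly_mapping_eqI) (simp add: lookup_poly_act)

lemma poly_act_one: fixes g :: "'q \<Rightarrow> 'q" assumes g: "bij g" shows "poly_act g 1 = 1"
proof (rule poly_mapping_eqI)
  fix m :: "'q \<Rightarrow>\<^sub>0 nat"
  have "Poly_Mapping.map_key g m = 0 \<longleftrightarrow> m = 0"
    using injD[OF mk_inj[OF g]] map_key_zero[OF bij_is_inj[OF g], where 'c=nat] by metis
  then show "Poly_Mapping.lookup (poly_act g 1) m = Poly_Mapping.lookup 1 m"
    by (simp add: lookup_poly_act g lookup_one)
qed

lemma poly_act_mult: fixes g :: "'q \<Rightarrow> 'q" assumes g: "bij g" shows "poly_act g (p * q) = poly_act g p * poly_act g q"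
proof (rule poly_mapping_eqI)
  fix m :: "'q \<Rightarrow>\<^sub>0 nat"
  let ?s = "Poly_Mapping.map_key g :: ('q \<Rightarrow>\<^sub>0 nat) \<Rightarrow> _"
  have b: "bij ?s" by (rule mk_bij[OF g])
  have ig: "inj g" using g bij_is_inj by blast
  have eq: "\<And>l r. (?s m = ?s l + ?s r) = (m = l + r)"
  proof -
    fix l r
    have "?s l + ?s r = ?s (l + r)" using map_key_plus[OF ig] by metis
    then show "(?s m = ?s l + ?s r) = (m = l + r)" using injD[OF mk_inj[OF g]] by metis
  qed
  have s1: "Poly_Mapping.lookup (poly_act g (p * q)) m
      = (\<Sum>l. Poly_Mapping.lookup p l * (\<Sum>r. Poly_Mapping.lookup q r when ?s m = l + r))"
    unfolding lookup_poly_act[OF g] lookup_mult ..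
  have s2: "(\<Sum>l. Poly_Mapping.lookup p l * (\<Sum>r. Poly_Mapping.lookup q r when ?s m = l + r))
     = (\<Sum>l. Poly_Mapping.lookup p (?s l) * (\<Sum>r. Poly_Mapping.lookup q r when ?s m = ?s l + r))"
    by (rule Sum_any.reindex_cong[OF b]) (simp add: o_def)
  have s3: "\<And>l. (\<Sum>r. Poly_Mapping.lookup q r when ?s m = ?s l + r) = (\<Sum>r. Poly_Mapping.lookup q (?s r) when ?s m = ?s l + ?s r)"
    by (rule Sum_any.reindex_cong[OF b]) (simp add: o_def)
  have s4: "Poly_Mapping.lookup (poly_act g p * poly_act g q) m = 
     (\<Sum>l. Poly_Mapping.lookup p (?s l) * (\<Sum>r. Poly_Mapping.lookup q (?s r) when m = l + r))"
    unfolding lookup_poly_act[OF g] lookup_mult ..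
  show "Poly_Mapping.lookup (poly_act g (p * q)) m = Poly_Mapping.lookup (poly_act g p * poly_act g q) m"
    unfolding s1 s2 s3 s4 eq ..
qed

lemma poly_act_eq0: fixes g :: "'q \<Rightarrow> 'q" assumes g: "bij g" shows "poly_act g p = 0 \<longleftrightarrow> p = 0"
proof
  assume h: "poly_act g p = 0"
  show "p = 0"
  proof (rule poly_mapping_eqI)
    fix m :: "'q \<Rightarrow>\<^sub>0 nat"
    have "surj (Poly_Mapping.map_key g :: ('q \<Rightarrow>\<^sub>0 nat) \<Rightarrow> _)" using mk_bij[OF g] bij_is_surj by blast
    then obtain m' where m: "m = Poly_Mapping.map_key g m'" by (metis surjD)
    have "Poly_Mapping.lookup p m = Poly_Mapping.lookup (poly_act g p) m'"
      unfolding m lookup_poly_act[OF g] ..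
    then show "Poly_Mapping.lookup p m = Poly_Mapping.lookup 0 m"
      using h by simp
  qed
qed (simp add: poly_act_zero g)

lemma act_Fract0: fixes g :: "'q::linorder \<Rightarrow> 'q" assumes g: "bij g" and b: "b \<noteq> 0"
  shows "act g (Fract a b) = Fract (poly_act g a) (poly_act g b)"
proof -
  let ?P = "\<lambda>r. snd r \<noteq> 0 \<and> Fract a b = Fract (fst r) (snd r)"
  have "?P (a, b)" using b by simp
  then have "?P (SOME r. ?P r)" by (rule someI)
  moreover obtain a' b' where ab: "(SOME r. ?P r) = (a', b')" by fastforce
  ultimately have b': "b' \<noteq> 0" and e: "Fract a b = Fract a' b'" by auto
  from e have e2: "a * b' = a' * b" using eq_fract(1)[OF b b'] by blast
  have nz: "poly_act g b \<noteq> 0" "poly_act g b' \<noteq> 0" using b b' poly_act_eq0[OF g] by auto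
  have "poly_act g a' * poly_act g b = poly_act g a * poly_act g b'"
    using e2 poly_act_mult[OF g] by metis
  then have "Fract (poly_act g a') (poly_act g b') = Fract (poly_act g a) (poly_act g b)"
    using eq_fract(1)[OF nz(2) nz(1)] by blast
  then show ?thesis unfolding act_def ab by simp
qed

lemma act_zero: fixes g :: "'q::linorder \<Rightarrow> 'q" assumes g: "bij g" shows "act g 0 = 0"
  using act_Fract0[OF g, of 1 0] by (simp add: fract_collapse poly_act_zero[OF g] poly_act_one[OF g] Zero_fract_def[symmetric])

lemma act_one: fixes g :: "'q::linorder \<Rightarrow> 'q" assumes g: "bij g" shows "act g 1 = 1"
  using act_Fract0[OF g, of 1 1] by (simp add: poly_act_one[OF g] One_fract_def[symmetric])

lemma act_Fract: fixes g :: "'q::linorder \<Rightarrow> 'q" assumes g: "bij g"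
  shows "act g (Fract a b) = Fract (poly_act g a) (poly_act g b)"
proof (cases "b = 0")
  case True
  then show ?thesis using act_zero[OF g] by (simp add: fract_collapse poly_act_zero[OF g])
qed (rule act_Fract0[OF g])

lemma act_add: fixes g :: "'q::linorder \<Rightarrow> 'q" assumes g: "bij g" shows "act g (p + q) = act g p + act g q"
proof -
  obtain a b where p: "p = Fract a b" "b \<noteq> 0" by (cases p)
  obtain c d where q: "q = Fract c d" "d \<noteq> 0" by (cases q)
  have nz: "poly_act g b \<noteq> 0" "poly_act g d \<noteq> 0" using p q poly_act_eq0[OF g] by auto
  show ?thesis using p q nz by (simp add: act_Fract[OF g] poly_act_add[OF g] poly_act_mult[OF g])
qed

lemma act_mult: fixes g :: "'q::linorder \<Rightarrow> 'q" assumes g: "bij g" shows "act g (p * q) = act g p * act g q"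
proof -
  obtain a b where p: "p = Fract a b" "b \<noteq> 0" by (cases p)
  obtain c d where q: "q = Fract c d" "d \<noteq> 0" by (cases q)
  show ?thesis using p q by (simp add: act_Fract[OF g] poly_act_mult[OF g])
qed

lemma act_inverse: fixes g :: "'q::linorder \<Rightarrow> 'q" assumes g: "bij g" shows "act g (inverse p) = inverse (act g p)"
proof -
  obtain a b where p: "p = Fract a b" "b \<noteq> 0" by (cases p)
  show ?thesis using p by (simp add: act_Fract[OF g])
qed

lemma act_divide: fixes g :: "'q::linorder \<Rightarrow> 'q" assumes g: "bij g" shows "act g (p / q) = act g p / act g q"
  by (simp add: divide_inverse act_mult[OF g] act_inverse[OF g])

lemma act_power: fixes g :: "'q::linorder \<Rightarrow> 'q" assumes g: "bij g" shows "act g (p ^ n) = act g p ^ n"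
  by (induction n) (simp_all add: act_one[OF g] act_mult[OF g])

lemma act_prod: fixes g :: "'q::linorder \<Rightarrow> 'q" assumes g: "bij g" shows "act g (prod f S) = (\<Prod>i\<in>S. act g (f i))"
proof (induction S rule: infinite_finite_induct)
  case (infinite A) then show ?case by (simp add: act_one[OF g])
next
  case empty then show ?case by (simp add: act_one[OF g])
next
  case (insert x F) then show ?case by (simp add: act_mult[OF g])
qed

definition cc :: "int \<Rightarrow> int \<Rightarrow> int" where
  "cc a b = (\<bar>a\<bar> * b + a * \<bar>b\<bar>) div 2"

lemma cc0 [simp]: "cc 0 b = 0" "cc a 0 = 0" by (simp_all add: cc_def)

lemma even_cc: "even (\<bar>a\<bar> * b + a * \<bar>b::int\<bar>)"
  by (cases "a \<ge> 0"; cases "b \<ge> 0") (auto simp: abs_if)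

lemma cc_pos: "cc a b \<noteq> 0 \<Longrightarrow> (a > 0 \<and> b > 0) \<or> (a < 0 \<and> b < 0)"
  by (cases "a \<ge> 0"; cases "b \<ge> 0") (auto simp: abs_if cc_def)

definition skewd :: "('q \<Rightarrow> int) \<Rightarrow> 'q imat \<Rightarrow> bool" where
  "skewd d M \<longleftrightarrow> (\<forall>i j. d i * M i j = - (d j * M j i))"

lemma skew_entry:
  fixes di dj dk mik mki mkj mjk :: int
  assumes "di > 0" "dj > 0" "dk > 0" "di * mik = - (dk * mki)" "dk * mkj = - (dj * mjk)"
  shows "di * (\<bar>mik\<bar> * mkj + mik * \<bar>mkj\<bar>) = - (dj * (\<bar>mjk\<bar> * mki + mjk * \<bar>mki\<bar>))"
proof -
  have "\<bar>di * mik\<bar> = \<bar>dk * mki\<bar>" using assms(4) by simp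
  then have a1: "di * \<bar>mik\<bar> = dk * \<bar>mki\<bar>" using assms(1,3) by (simp add: abs_mult)
  have "\<bar>dk * mkj\<bar> = \<bar>dj * mjk\<bar>" using assms(5) by simp
  then have a2: "dk * \<bar>mkj\<bar> = dj * \<bar>mjk\<bar>" using assms(2,3) by (simp add: abs_mult)
  have "di * (\<bar>mik\<bar> * mkj + mik * \<bar>mkj\<bar>) = (di * \<bar>mik\<bar>) * mkj + (di * mik) * \<bar>mkj\<bar>"
    by (simp add: algebra_simps)
  also have "\<dots> = \<bar>mki\<bar> * (dk * mkj) - mki * (dk * \<bar>mkj\<bar>)"
    using a1 assms(4) by (simp add: algebra_simps)
  also have "\<dots> = - (dj * (\<bar>mjk\<bar> * mki + mjk * \<bar>mki\<bar>))"
    using a2 assms(5) by (simp add: algebra_simps)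
  finally show ?thesis .
qed

lemma half_eq: fixes a b X Y :: int assumes "a * X = - (b * Y)" "even X" "even Y"
  shows "a * (X div 2) = - (b * (Y div 2))"
proof -
  obtain x y where xy: "X = 2 * x" "Y = 2 * y" using assms(2,3) by (auto elim!: evenE)
  have "2 * (a * x + b * y) = 0" using assms(1) unfolding xy by (simp add: algebra_simps)
  then show ?thesis using xy by simp
qed

lemma skewd_mut: assumes d: "\<forall>i. d i > 0" and s: "skewd d M" shows "skewd d (mut_mat k M)"
  unfolding skewd_def
proof (intro allI)
  fix i j
  show "d i * mut_mat k M i j = - (d j * mut_mat k M j i)"
  proof (cases "i = k \<or> j = k")
    case True
    have "d i * M i j = - (d j * M j i)" using s unfolding skewd_def by blast
    then show ?thesis using True unfolding mut_mat_def by auto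
  next
    case False
    let ?X = "\<bar>M i k\<bar> * M k j + M i k * \<bar>M k j\<bar>" and ?Y = "\<bar>M j k\<bar> * M k i + M j k * \<bar>M k i\<bar>"
    have e: "d i * ?X = - (d j * ?Y)"
      by (rule skew_entry) (use d s in \<open>unfold skewd_def, blast+\<close>)
    have h: "d i * (?X div 2) = - (d j * (?Y div 2))" by (rule half_eq[OF e even_cc even_cc])
    have m: "d i * M i j = - (d j * M j i)" using s unfolding skewd_def by blast
    have "mut_mat k M i j = M i j + ?X div 2"
      using False unfolding mut_mat_def by simp
    then have "d i * mut_mat k M i j = d i * M i j + d i * (?X div 2)"
      by (simp only: distrib_left)
    moreover have "mut_mat k M j i = M j i + ?Y div 2"
      using False unfolding mut_mat_def by simp
    then have "d j * mut_mat k M j i = d j * M j i + d j * (?Y div 2)"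
      by (simp only: distrib_left)
    ultimately show ?thesis using h m by linarith
  qed
qed

lemma seeds_skewd: assumes "s \<in> cluster_seeds B" "\<forall>i. d i > 0" "skewd d B" shows "skewd d (fst s)"
  using assms
proof induction
  case init then show ?case by simp
next
  case (mut s k)
  obtain M y where "s = (M, y)" by fastforce
  then show ?case using mut skewd_mut[of d M k] by (simp add: mut_seed_def)
qed

lemma skewd_sign: assumes "\<forall>i. d i > 0" "skewd d M"
  shows "M i j > 0 \<longleftrightarrow> M j i < 0" "M i i = 0"
proof -
  have e: "d i * M i j = - (d j * M j i)" "d i * M i i = - (d i * M i i)" using assms(2) unfolding skewd_def by blast+
  have p: "d i > 0" "d j > 0" using assms(1) by auto
  show "M i j > 0 \<longleftrightarrow> M j i < 0"
  proof
    assume "0 < M i j"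
    then have "0 < d i * M i j" using p by simp
    then have "d j * M j i < 0" using e(1) by linarith
    then show "M j i < 0" using p by (simp add: mult_less_0_iff)
  next
    assume "M j i < 0"
    then have "d j * M j i < 0" using p by (simp add: mult_pos_neg)
    then have "0 < d i * M i j" using e(1) by linarith
    then show "0 < M i j" using p by (simp add: zero_less_mult_iff)
  qed
  show "M i i = 0" using e(2) p by simp
qed

definition Msim :: "'q imat \<Rightarrow> 'q set \<Rightarrow> 'q imat" where
  "Msim A S i j = (if i \<in> S \<or> j \<in> S then - A i j else A i j + (\<Sum>k\<in>S. cc (A i k) (A k j)))"

definition exch :: "'q imat \<Rightarrow> ('q \<Rightarrow> 'a::field) \<Rightarrow> 'q \<Rightarrow> 'a" where
  "exch A x i = ((\<Prod>l\<in>{l. A l i > 0}. x l ^ nat (A l i)) + (\<Prod>l\<in>{l. A l i < 0}. x l ^ nat (- A l i))) / x i"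

definition Xsim :: "'q imat \<Rightarrow> ('q \<Rightarrow> 'a::field) \<Rightarrow> 'q set \<Rightarrow> 'q \<Rightarrow> 'a" where
  "Xsim A x S i = (if i \<in> S then exch A x i else x i)"

lemma fold_sim:
  fixes A :: "'q::finite imat" and x :: "'q \<Rightarrow> 'a::field"
  assumes "distinct ks" "\<forall>k\<in>set ks. \<forall>k'\<in>set ks. A k k' = 0"
  shows "fold mut_seed ks (A, x) = (Msim A (set ks), Xsim A x (set ks))"
  using assms
proof (induction ks rule: rev_induct)
  case Nil
  then show ?case by (simp add: fun_eq_iff Msim_def Xsim_def)
next
  case (snoc k ks)
  let ?S = "set ks"
  have kS: "k \<notin> ?S" using snoc.prems by simp
  have ind: "\<forall>a\<in>insert k ?S. \<forall>b\<in>insert k ?S. A a b = 0" using snoc.prems by simp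
  have IH: "fold mut_seed ks (A, x) = (Msim A ?S, Xsim A x ?S)" using snoc by simp
  have col: "Msim A ?S l k = A l k" for l
  proof (cases "l \<in> ?S")
    case True then show ?thesis using ind by (simp add: Msim_def)
  next
    case False
    have "(\<Sum>k'\<in>?S. cc (A l k') (A k' k)) = 0" using ind by (intro sum.neutral) simp
    then show ?thesis using False kS by (simp add: Msim_def)
  qed
  have row: "Msim A ?S k j = A k j" if "j \<notin> ?S" for j
  proof -
    have "(\<Sum>k'\<in>?S. cc (A k k') (A k' j)) = 0" using ind by (intro sum.neutral) simp
    then show ?thesis using that kS by (simp add: Msim_def)
  qed
  have M: "mut_mat k (Msim A ?S) = Msim A (insert k ?S)"
  proof (intro ext)
    fix i j
    show "mut_mat k (Msim A ?S) i j = Msim A (insert k ?S) i j"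
    proof (cases "i = k \<or> j = k")
      case True
      then show ?thesis
      proof
        assume "i = k" then show ?thesis
          using ind kS row by (cases "j \<in> ?S") (auto simp: mut_mat_def Msim_def)
      next
        assume "j = k" then show ?thesis using col by (auto simp: mut_mat_def Msim_def)
      qed
    next
      case False
      show ?thesis
      proof (cases "i \<in> ?S \<or> j \<in> ?S")
        case True
        then have "Msim A ?S i k = 0 \<or> Msim A ?S k j = 0" using ind col by (auto simp: Msim_def)
        then show ?thesis using True False by (auto simp: mut_mat_def Msim_def)
      next
        case F2: False
        have "Msim A ?S i k = A i k" "Msim A ?S k j = A k j" using col row F2 by auto
        then show ?thesis using False F2 kS
          by (simp add: mut_mat_def Msim_def cc_def add.commute add.left_commute)
      qed
    qed
  qed
  have xl: "Xsim A x ?S l = x l" if "A l k \<noteq> 0" for l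
    using that ind by (auto simp: Xsim_def)
  have xk: "Xsim A x ?S k = x k" using kS by (simp add: Xsim_def)
  have v: "((\<Prod>i\<in>{i. Msim A ?S i k > 0}. Xsim A x ?S i ^ nat (Msim A ?S i k))
          + (\<Prod>i\<in>{i. Msim A ?S i k < 0}. Xsim A x ?S i ^ nat (- Msim A ?S i k))) / Xsim A x ?S k
        = exch A x k"
    unfolding exch_def col xk
    by (intro arg_cong2[where f="(/)"] arg_cong2[where f="(+)"] prod.cong refl) (auto simp: xl)
  have X: "(Xsim A x ?S)(k := exch A x k) = Xsim A x (insert k ?S)"
    by (auto simp: Xsim_def fun_eq_iff)
  have "fold mut_seed (ks @ [k]) (A, x) = mut_seed k (fold mut_seed ks (A, x))" by simp
  also have "\<dots> = mut_seed k (Msim A ?S, Xsim A x ?S)" by (simp only: IH)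
  also have "\<dots> = (mut_mat k (Msim A ?S), (Xsim A x ?S)(k := exch A x k))"
    unfolding mut_seed_def prod.case v ..
  finally show ?case unfolding M X by simp
qed

lemma exch_act:
  fixes A :: "'q::{finite,linorder} imat" and x :: "'q \<Rightarrow> 'q ratfun"
  assumes g: "bij g" and inv: "\<forall>i j. A (g i) (g j) = A i j" and eqv: "\<forall>i. act g (x i) = x (g i)"
  shows "act g (exch A x i) = exch A x (g i)"
proof -
  have ig: "inj g" using g bij_is_inj by blast
  have s1: "{l. A l (g i) > 0} = g ` {l. A l i > 0}"
  proof -
    have "{l. A l (g i) > 0} = g ` {l. A (g l) (g i) > 0}" using g
      by (auto simp: bij_def image_iff)
    then show ?thesis using inv by simp
  qed
  have s2: "{l. A l (g i) < 0} = g ` {l. A l i < 0}"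
  proof -
    have "{l. A l (g i) < 0} = g ` {l. A (g l) (g i) < 0}" using g
      by (auto simp: bij_def image_iff)
    then show ?thesis using inv by simp
  qed
  have p1: "(\<Prod>l\<in>{l. A l (g i) > 0}. x l ^ nat (A l (g i))) = (\<Prod>l\<in>{l. A l i > 0}. x (g l) ^ nat (A l i))"
    unfolding s1 by (subst prod.reindex) (auto simp: inj_on_def ig[unfolded inj_def] inv)
  have p2: "(\<Prod>l\<in>{l. A l (g i) < 0}. x l ^ nat (- A l (g i))) = (\<Prod>l\<in>{l. A l i < 0}. x (g l) ^ nat (- A l i))"
    unfolding s2 by (subst prod.reindex) (auto simp: inj_on_def ig[unfolded inj_def] inv)
  show ?thesis
    unfolding exch_def act_divide[OF g] act_add[OF g] act_prod[OF g] act_power[OF g] p1 p2 using eqv by simp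
qed

theorem mainTheorem11:
  fixes B A :: "'q::{finite,linorder} imat"
    and G :: "('q \<Rightarrow> 'q) set"
    and x :: "'q \<Rightarrow> 'q ratfun"
    and \<Omega> :: "'q set"
    and ks :: "'q list"
    and An :: "'q imat" and xn :: "'q \<Rightarrow> 'q ratfun"
  assumes "skew_symmetrizable B"
    and "admissible B G"
    and "(A, x) \<in> cluster_seeds B"
    and "G_invariant_seed G (A, x)"
    and "G_orbit G \<Omega>"
    and "distinct ks" and "set ks = \<Omega>"
    and "(An, xn) = fold mut_seed ks (A, x)"
  shows "aut_group An G \<and> (\<forall>i. \<forall>g\<in>G. An i (g i) = 0 \<and> xn (g i) = act g (xn i))"
proof -
  obtain d where d: "\<forall>i. d i > 0" and dB: "skewd d B"
    using assms(1) unfolding skew_symmetrizable_def skewd_def by blast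
  have skA: "skewd d A" using seeds_skewd[OF assms(3) d dB] by simp
  have pos_iff: "\<And>i j. A i j > 0 \<longleftrightarrow> A j i < 0" using skewd_sign[OF d skA] by blast
  have diag: "\<And>i. A i i = 0" using skewd_sign[OF d skA] by blast
  have adm: "admissible A G" and eqv: "\<forall>g\<in>G. \<forall>i. act g (x i) = x (g i)"
    using assms(4) unfolding G_invariant_seed_def by auto
  have aut: "aut_group A G" using adm unfolding admissible_def by blast
  have bijG: "\<And>g. g \<in> G \<Longrightarrow> bij g" using aut unfolding aut_group_def is_aut_def by blast
  have invA: "\<And>g i j. g \<in> G \<Longrightarrow> A (g i) (g j) = A i j" using aut unfolding aut_group_def is_aut_def by blast
  have compG: "\<And>g h. g \<in> G \<Longrightarrow> h \<in> G \<Longrightarrow> g \<circ> h \<in> G" using aut unfolding aut_group_def by blast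
  have invG: "\<And>g. g \<in> G \<Longrightarrow> inv g \<in> G" using aut unfolding aut_group_def by blast
  have invgg: "\<And>g i. g \<in> G \<Longrightarrow> inv g (g i) = i" using bijG bij_is_inj inv_f_f by metis
  have admr: "\<And>i j. (\<exists>g\<in>G. j = g i) \<Longrightarrow> i \<noteq> j \<Longrightarrow> A i j \<le> 0 \<and> \<not> (\<exists>k. A i k > 0 \<and> A k j > 0)"
    using adm unfolding admissible_def by blast
  obtain i0 where Om: "\<Omega> = (\<lambda>g. g i0) ` G" using assms(5) unfolding G_orbit_def by blast
  have stab: "\<And>g i. g \<in> G \<Longrightarrow> (g i \<in> \<Omega>) = (i \<in> \<Omega>)"
  proof -
    fix g i assume g: "g \<in> G"
    show "(g i \<in> \<Omega>) = (i \<in> \<Omega>)"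
    proof
      assume "g i \<in> \<Omega>"
      then obtain h where h: "h \<in> G" "g i = h i0" using Om by blast
      then have "i = (inv g \<circ> h) i0" using invgg[OF g, of i] by simp
      then show "i \<in> \<Omega>" using Om compG[OF invG[OF g] h(1)] by blast
    next
      assume "i \<in> \<Omega>"
      then obtain h where h: "h \<in> G" "i = h i0" using Om by blast
      then have "g i = (g \<circ> h) i0" by simp
      then show "g i \<in> \<Omega>" using Om compG[OF g h(1)] by blast
    qed
  qed
  have zero_rel: "\<And>g i. g \<in> G \<Longrightarrow> A i (g i) = 0"
  proof -
    fix g i assume g: "g \<in> G"
    show "A i (g i) = 0"
    proof (cases "g i = i")
      case True then show ?thesis using diag by simp
    next
      case False
      have ex: "\<exists>h\<in>G. g i = h i" using g by blast
      have "A i (g i) \<le> 0" using admr[where i=i and j="g i", OF ex] False by auto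
      moreover have "A (g i) i \<le> 0" using admr[where i="g i" and j=i] invgg[OF g, of i] invG[OF g] False by metis
      ultimately show ?thesis using pos_iff[of "g i" i] by linarith
    qed
  qed
  have ind: "\<forall>k\<in>\<Omega>. \<forall>k'\<in>\<Omega>. A k k' = 0"
  proof (intro ballI)
    fix k k' assume "k \<in> \<Omega>" "k' \<in> \<Omega>"
    then obtain h1 h2 where h: "h1 \<in> G" "h2 \<in> G" "k = h1 i0" "k' = h2 i0" using Om by blast
    then have "k' = (h2 \<circ> inv h1) k" using invgg[OF h(1)] by simp
    then show "A k k' = 0" using zero_rel[OF compG[OF h(2) invG[OF h(1)]]] by simp
  qed
  have fs: "fold mut_seed ks (A, x) = (Msim A \<Omega>, Xsim A x \<Omega>)"
    using fold_sim[OF assms(6)] ind assms(7) by simp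
  have An: "An = Msim A \<Omega>" and xn: "xn = Xsim A x \<Omega>" using assms(8) fs by auto
  have Minv: "\<And>g i j. g \<in> G \<Longrightarrow> Msim A \<Omega> (g i) (g j) = Msim A \<Omega> i j"
  proof -
    fix g i j assume g: "g \<in> G"
    have bb: "bij_betw g \<Omega> \<Omega>"
    proof -
      have "inj_on g \<Omega>" using bijG[OF g] bij_is_inj inj_on_subset by blast
      moreover have "g ` \<Omega> = \<Omega>"
      proof
        show "g ` \<Omega> \<subseteq> \<Omega>" using stab[OF g] by blast
        show "\<Omega> \<subseteq> g ` \<Omega>"
        proof
          fix k assume k: "k \<in> \<Omega>"
          have "g (inv g k) = k" using bijG[OF g] by (meson bij_inv_eq_iff)
          moreover have "inv g k \<in> \<Omega>" using stab[OF g, of "inv g k"] k calculation by simp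
          ultimately show "k \<in> g ` \<Omega>" by (metis image_eqI)
        qed
      qed
      ultimately show ?thesis unfolding bij_betw_def by blast
    qed
    have "(\<Sum>k\<in>\<Omega>. cc (A (g i) k) (A k (g j))) = (\<Sum>k\<in>\<Omega>. cc (A (g i) (g k)) (A (g k) (g j)))"
      using sum.reindex_bij_betw[OF bb, of "\<lambda>k. cc (A (g i) k) (A k (g j))"] by simp
    also have "\<dots> = (\<Sum>k\<in>\<Omega>. cc (A i k) (A k j))" using invA[OF g] by simp
    finally show "Msim A \<Omega> (g i) (g j) = Msim A \<Omega> i j"
      unfolding Msim_def using stab[OF g] invA[OF g] by simp
  qed
  have agrp: "aut_group An G"
    using aut Minv unfolding An aut_group_def is_aut_def by blast
  have zero: "\<And>g i. g \<in> G \<Longrightarrow> An i (g i) = 0"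
  proof -
    fix g i assume g: "g \<in> G"
    show "An i (g i) = 0"
    proof (cases "i \<in> \<Omega>")
      case True
      then show ?thesis unfolding An Msim_def using zero_rel[OF g] by simp
    next
      case False
      then have ng: "g i \<notin> \<Omega>" using stab[OF g] by blast
      have terms: "cc (A i k) (A k (g i)) = 0" for k
      proof (rule ccontr)
        assume "cc (A i k) (A k (g i)) \<noteq> 0"
        then have c: "(A i k > 0 \<and> A k (g i) > 0) \<or> (A i k < 0 \<and> A k (g i) < 0)" by (rule cc_pos)
        show False
        proof (cases "g i = i")
          case True
          then show False using c pos_iff[of i k] pos_iff[of k i] by auto
        next
          case gi: False
          have ex: "\<exists>h\<in>G. g i = h i" using g by blast
          have n1: "\<not> (A i k > 0 \<and> A k (g i) > 0)" using admr[where i=i and j="g i", OF ex] gi by auto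
          have n2: "\<not> (A (g i) k > 0 \<and> A k i > 0)"
            using admr[where i="g i" and j=i] invgg[OF g, of i] invG[OF g] gi by metis
          show False using c n1 n2 pos_iff[of "g i" k] pos_iff[of k i] by auto
        qed
      qed
      show ?thesis unfolding An Msim_def using False ng zero_rel[OF g] terms by simp
    qed
  qed
  have xeq: "\<And>g i. g \<in> G \<Longrightarrow> xn (g i) = act g (xn i)"
  proof -
    fix g i assume g: "g \<in> G"
    show "xn (g i) = act g (xn i)"
    proof (cases "i \<in> \<Omega>")
      case True
      then show ?thesis unfolding xn Xsim_def using stab[OF g, of i]
        exch_act[OF bijG[OF g], of A x i] invA[OF g] eqv g by simp
    next
      case False
      then show ?thesis unfolding xn Xsim_def using stab[OF g, of i] eqv g by simp
    qed
  qed
  show ?thesis using agrp zero xeq by blast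
qed

end
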